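(* Let $m\ge 2$ and let $v_m=\sum_{\sigma\in\mathscr{T}_m}(-1)^{\sigma^{-1}(1)-1}\sigma\in\mathbb{Z}\mathcal{S}_m$. Then $$v_m=\prod_{i=2}^{m}\left(1-(-1)^i\tau_i\right)=(1-\tau_2)(1+\tau_3)(1-\tau_4)\cdots\left(1-(-1)^m\tau_m\right),$$ the product being taken in increasing order of $i$ from left to right.
   Context: $\mathcal{S}_m$ is the group of bijections of $I_m=\{1,\ldots,m\}$, with $\sigma\circ\tau$ meaning apply $\tau$ first, then $\sigma$; $\mathbb{Z}\mathcal{S}_m$ is its integral group ring, with multiplication induced by $\circ$. $\mathscr{T}_m=\{\sigma\in\mathcal{S}_m \mid \exists t\in I_m:\ \sigma(1)>\sigma(2)>\cdots>\sigma(t)=1,\ \sigma(t)<\sigma(t+1)<\cdots<\sigma(m)\}$. For $i\in I_m$, $\tau_i\in\mathcal{S}_m$ is defined by $\tau_i(j)=i+1-j$ for $1\le j\le i$ and $\tau_i(j)=j$ for $j>i$. *)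

theory Defs
  imports "HOL-Combinatorics.Permutations"
begin

text \<open>The symmetric group S_m: bijections of I_m = {1..m}, extended by the identity
  outside I_m. Composition sigma o tau applies tau first.\<close>
definition Sym :: "nat \<Rightarrow> (nat \<Rightarrow> nat) set" where
  "Sym m = {\<sigma>. \<sigma> permutes {1..m}}"

text \<open>Elements of the integral group ring Z S_m are represented as coefficient
  functions (nat => nat) => int supported on Sym m.\<close>
type_synonym grpring = "(nat \<Rightarrow> nat) \<Rightarrow> int"

definition gr_basis :: "nat \<Rightarrow> (nat \<Rightarrow> nat) \<Rightarrow> grpring" where
  "gr_basis m \<sigma> = (\<lambda>\<pi>. if \<pi> = \<sigma> \<and> \<sigma> \<in> Sym m then 1 else 0)"

definition gr_one :: "nat \<Rightarrow> grpring" where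
  "gr_one m = gr_basis m id"

definition gr_add :: "grpring \<Rightarrow> grpring \<Rightarrow> grpring" where
  "gr_add a b = (\<lambda>\<pi>. a \<pi> + b \<pi>)"

definition gr_smult :: "int \<Rightarrow> grpring \<Rightarrow> grpring" where
  "gr_smult c a = (\<lambda>\<pi>. c * a \<pi>)"

definition gr_mult :: "nat \<Rightarrow> grpring \<Rightarrow> grpring \<Rightarrow> grpring" where
  "gr_mult m a b = (\<lambda>\<pi>. \<Sum>\<sigma>\<in>Sym m. \<Sum>\<tau>\<in>Sym m. if \<sigma> \<circ> \<tau> = \<pi> then a \<sigma> * b \<tau> else 0)"

definition Tset :: "nat \<Rightarrow> (nat \<Rightarrow> nat) set" where
  "Tset m = {\<sigma> \<in> Sym m. \<exists>t\<in>{1..m}.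
      (\<forall>j. 1 \<le> j \<and> j < t \<longrightarrow> \<sigma> j > \<sigma> (j + 1)) \<and> \<sigma> t = 1 \<and>
      (\<forall>j. t \<le> j \<and> j < m \<longrightarrow> \<sigma> j < \<sigma> (j + 1))}"

definition tau :: "nat \<Rightarrow> nat \<Rightarrow> nat" where
  "tau i = (\<lambda>j. if 1 \<le> j \<and> j \<le> i then i + 1 - j else j)"

definition v_elem :: "nat \<Rightarrow> grpring" where
  "v_elem m = (\<lambda>\<pi>. if \<pi> \<in> Tset m then (-1) ^ (inv \<pi> 1 - 1) else 0)"

definition factor :: "nat \<Rightarrow> nat \<Rightarrow> grpring" where
  "factor m i = gr_add (gr_one m) (gr_smult (- ((-1) ^ i)) (gr_basis m (tau i)))"

definition prod_factors :: "nat \<Rightarrow> grpring" where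
  "prod_factors m = foldl (gr_mult m) (gr_one m) (map (factor m) [2..<m+1])"

end

theory Submission
  imports Defs
begin

definition supp :: "nat \<Rightarrow> grpring \<Rightarrow> bool" where
  "supp M a = (\<forall>\<pi>. \<pi> \<notin> Sym M \<longrightarrow> a \<pi> = 0)"

definition F :: "nat \<Rightarrow> grpring \<Rightarrow> grpring" where
  "F i a = (\<lambda>\<pi>. a \<pi> + (- ((-1) ^ i)) * a (\<pi> \<circ> tau i))"

definition e :: grpring where
  "e = (\<lambda>\<pi>. if \<pi> = id then 1 else 0)"

lemma tau_invol: "tau i (tau i j) = j"
  unfolding tau_def by auto

lemma tau_comp: "tau i \<circ> tau i = id"
  by (auto simp: tau_invol)

lemma tau_permutes: "tau i permutes {1..i}"
  unfolding permutes_def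
proof (intro conjI allI impI)
  fix x assume "x \<notin> {1..i}" then show "tau i x = x" unfolding tau_def by auto
next
  fix y show "\<exists>!x. tau i x = y"
  proof (rule ex1I[of _ "tau i y"])
    show "tau i (tau i y) = y" by (rule tau_invol)
  next
    fix x assume "tau i x = y"
    then show "x = tau i y" using tau_invol[of i x] by simp
  qed
qed

lemma tau_Sym: "i \<le> M \<Longrightarrow> tau i \<in> Sym M"
proof -
  assume "i \<le> M"
  then have "{1..i} \<subseteq> {1..M}" by simp
  then have "tau i permutes {1..M}" by (rule permutes_subset[OF tau_permutes])
  then show ?thesis unfolding Sym_def by simp
qed

lemma id_Sym: "id \<in> Sym M"
  unfolding Sym_def by simp

lemma gr_one_e: "gr_one M = e"
  unfolding gr_one_def gr_basis_def e_def using id_Sym by simp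

lemma mult_basis:
  assumes "supp M a" "g \<in> Sym M" "g \<circ> g = id"
  shows "gr_mult M a (gr_basis M g) = (\<lambda>\<pi>. a (\<pi> \<circ> g))"
proof
  fix \<pi>
  have fin: "finite (Sym M)" unfolding Sym_def
    using finite_permutations[of "{1..M}"] by simp
  have "gr_mult M a (gr_basis M g) \<pi> =
     (\<Sum>\<sigma>\<in>Sym M. \<Sum>\<tau>\<in>Sym M. if \<tau> = g then (if \<sigma> \<circ> g = \<pi> then a \<sigma> else 0) else 0)"
    unfolding gr_mult_def gr_basis_def using assms(2)
    by (intro sum.cong refl) auto
  also have "\<dots> = (\<Sum>\<sigma>\<in>Sym M. if \<sigma> = \<pi> \<circ> g then a \<sigma> else 0)"
  proof (intro sum.cong refl)
    fix \<sigma> assume "\<sigma> \<in> Sym M"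
    have "(\<sigma> \<circ> g = \<pi>) = (\<sigma> = \<pi> \<circ> g)"
      using assms(3) by (metis comp_assoc comp_id)
    then show "(\<Sum>\<tau>\<in>Sym M. if \<tau> = g then (if \<sigma> \<circ> g = \<pi> then a \<sigma> else 0) else 0)
        = (if \<sigma> = \<pi> \<circ> g then a \<sigma> else 0)"
      using fin assms(2) by simp
  qed
  also have "\<dots> = a (\<pi> \<circ> g)"
    using fin assms(1) unfolding supp_def by simp
  finally show "gr_mult M a (gr_basis M g) \<pi> = a (\<pi> \<circ> g)" .
qed

lemma mult_add: "gr_mult M a (gr_add b c) = gr_add (gr_mult M a b) (gr_mult M a c)"
proof
  fix \<pi>
  have "\<And>\<sigma> \<tau>. (if \<sigma> \<circ> \<tau> = \<pi> then a \<sigma> * (b \<tau> + c \<tau>) else 0) =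
     (if \<sigma> \<circ> \<tau> = \<pi> then a \<sigma> * b \<tau> else 0) + (if \<sigma> \<circ> \<tau> = \<pi> then a \<sigma> * c \<tau> else 0)"
    by (simp add: distrib_left)
  then show "gr_mult M a (gr_add b c) \<pi> = gr_add (gr_mult M a b) (gr_mult M a c) \<pi>"
    unfolding gr_mult_def gr_add_def by (simp only: sum.distrib)
qed

lemma mult_smult: "gr_mult M a (gr_smult c b) = gr_smult c (gr_mult M a b)"
proof
  fix \<pi>
  have "\<And>\<sigma> \<tau>. (if \<sigma> \<circ> \<tau> = \<pi> then a \<sigma> * (c * b \<tau>) else 0) =
     c * (if \<sigma> \<circ> \<tau> = \<pi> then a \<sigma> * b \<tau> else 0)"
    by simp
  then show "gr_mult M a (gr_smult c b) \<pi> = gr_smult c (gr_mult M a b) \<pi>"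
    unfolding gr_mult_def gr_smult_def by (simp only: sum_distrib_left)
qed

lemma mult_factor:
  assumes "supp M a" "i \<le> M"
  shows "gr_mult M a (factor M i) = F i a"
  unfolding factor_def mult_add mult_smult gr_one_def
  using mult_basis[OF assms(1) id_Sym] mult_basis[OF assms(1) tau_Sym[OF assms(2)] tau_comp]
  by (auto simp: F_def gr_add_def gr_smult_def)

lemma supp_F:
  assumes "supp M a" "i \<le> M"
  shows "supp M (F i a)"
  unfolding supp_def F_def
proof (intro allI impI)
  fix \<pi> assume h: "\<pi> \<notin> Sym M"
  have "\<pi> \<circ> tau i \<notin> Sym M"
  proof
    assume "\<pi> \<circ> tau i \<in> Sym M"
    then have "(\<pi> \<circ> tau i) \<circ> tau i \<in> Sym M"
      using tau_Sym[OF assms(2)] unfolding Sym_def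
      by (auto intro: permutes_compose)
    then show False using h by (simp add: comp_assoc tau_comp)
  qed
  then show "a \<pi> + - ((- 1) ^ i) * a (\<pi> \<circ> tau i) = 0"
    using h assms(1) unfolding supp_def by simp
qed

lemma foldl_F:
  "supp M a \<Longrightarrow> set xs \<subseteq> {1..M} \<Longrightarrow>
   foldl (gr_mult M) a (map (factor M) xs) = foldl (\<lambda>a i. F i a) a xs"
proof (induction xs arbitrary: a)
  case Nil then show ?case by simp
next
  case (Cons x xs)
  have x: "x \<le> M" using Cons.prems(2) by simp
  have "foldl (gr_mult M) a (map (factor M) (x # xs)) =
      foldl (gr_mult M) (F x a) (map (factor M) xs)"
    using mult_factor[OF Cons.prems(1) x] by simp
  also have "\<dots> = foldl (\<lambda>a i. F i a) (F x a) xs"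
    using Cons.IH[OF supp_F[OF Cons.prems(1) x]] Cons.prems(2) by simp
  finally show ?case by simp
qed

lemma supp_e: "supp M e"
  unfolding supp_def
proof (intro allI impI)
  fix \<pi> :: "nat \<Rightarrow> nat" assume "\<pi> \<notin> Sym M"
  then have "\<pi> \<noteq> id" using id_Sym by blast
  then show "e \<pi> = 0" unfolding e_def by simp
qed

lemma prod_factors_F: "prod_factors m = foldl (\<lambda>a i. F i a) e [2..<m+1]"
  unfolding prod_factors_def gr_one_e
proof (rule foldl_F[OF supp_e])
  show "set [2..<m + 1] \<subseteq> {1..m}" by (rule subsetI) (simp, arith)
qed

lemma TsetD:
  assumes "\<sigma> \<in> Tset n"
  obtains t where "t \<in> {1..n}" "\<And>j. 1 \<le> j \<Longrightarrow> j < t \<Longrightarrow> \<sigma> j > \<sigma> (j + 1)" "\<sigma> t = 1"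
    "\<And>j. t \<le> j \<Longrightarrow> j < n \<Longrightarrow> \<sigma> j < \<sigma> (j + 1)" "inv \<sigma> 1 = t" "\<sigma> permutes {1..n}"
proof -
  from assms have p: "\<sigma> permutes {1..n}" unfolding Tset_def Sym_def by auto
  from assms obtain t where t: "t \<in> {1..n}" "\<forall>j. 1 \<le> j \<and> j < t \<longrightarrow> \<sigma> j > \<sigma> (j + 1)" "\<sigma> t = 1"
      "\<forall>j. t \<le> j \<and> j < n \<longrightarrow> \<sigma> j < \<sigma> (j + 1)"
    unfolding Tset_def by blast
  have "inv \<sigma> 1 = t" using permutes_inv_eq[OF p] t(3) by simp
  then show ?thesis using that t p by blast
qed

lemma TsetI:
  assumes "\<sigma> permutes {1..n}" "t \<in> {1..n}" "\<And>j. 1 \<le> j \<Longrightarrow> j < t \<Longrightarrow> \<sigma> j > \<sigma> (j + 1)" "\<sigma> t = 1"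
    "\<And>j. t \<le> j \<Longrightarrow> j < n \<Longrightarrow> \<sigma> j < \<sigma> (j + 1)"
  shows "\<sigma> \<in> Tset n"
  unfolding Tset_def Sym_def using assms by blast

lemma Tset_lift:
  assumes "\<sigma> \<in> Tset m"
  shows "\<sigma> \<in> Tset (Suc m)"
proof -
  obtain t where t: "t \<in> {1..m}" "\<And>j. 1 \<le> j \<Longrightarrow> j < t \<Longrightarrow> \<sigma> j > \<sigma> (j + 1)" "\<sigma> t = 1"
    "\<And>j. t \<le> j \<Longrightarrow> j < m \<Longrightarrow> \<sigma> j < \<sigma> (j + 1)" "\<sigma> permutes {1..m}"
    using TsetD[OF assms] by metis
  have p: "\<sigma> permutes {1..Suc m}" using t(5) permutes_subset by fastforce
  have s: "\<sigma> (Suc m) = Suc m" using t(5) permutes_not_in by fastforce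
  have sm: "\<sigma> m \<in> {1..m}" using t(1) permutes_in_image[OF t(5)] by simp
  show ?thesis
  proof (rule TsetI[OF p, of t])
    fix j assume "t \<le> j" "j < Suc m"
    show "\<sigma> j < \<sigma> (j + 1)"
    proof (cases "j < m")
      case True then show ?thesis using t(4) \<open>t \<le> j\<close> by simp
    next
      case False then have "j = m" using \<open>j < Suc m\<close> by simp
      then show ?thesis using s sm by simp
    qed
  qed (use t in auto)
qed

lemma Tset_rev:
  assumes "\<sigma> \<in> Tset n"
  shows "\<sigma> \<circ> tau n \<in> Tset n \<and> inv (\<sigma> \<circ> tau n) 1 = n + 1 - inv \<sigma> 1"
proof -
  obtain t where t: "t \<in> {1..n}" "\<And>j. 1 \<le> j \<Longrightarrow> j < t \<Longrightarrow> \<sigma> j > \<sigma> (j + 1)" "\<sigma> t = 1"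
    "\<And>j. t \<le> j \<Longrightarrow> j < n \<Longrightarrow> \<sigma> j < \<sigma> (j + 1)" "inv \<sigma> 1 = t" "\<sigma> permutes {1..n}"
    using TsetD[OF assms] by metis
  let ?r = "\<sigma> \<circ> tau n"
  have p: "?r permutes {1..n}" using permutes_compose[OF tau_permutes t(6)] .
  have tv: "\<And>j. 1 \<le> j \<Longrightarrow> j \<le> n \<Longrightarrow> tau n j = n + 1 - j" unfolding tau_def by auto
  have r1: "?r (n + 1 - t) = 1" using t(1,3) tv[of "n+1-t"] by auto
  have "?r \<in> Tset n"
  proof (rule TsetI[OF p, of "n + 1 - t"])
    show "n + 1 - t \<in> {1..n}" using t(1) by auto
    show "?r (n + 1 - t) = 1" by (rule r1)
  next
    fix j assume j: "1 \<le> j" "j < n + 1 - t"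
    have "\<sigma> (n - j) < \<sigma> (n - j + 1)" using t(4)[of "n - j"] j t(1) by auto
    moreover have "n - j + 1 = n + 1 - j" using j t(1) by auto
    ultimately show "?r j > ?r (j + 1)" using j t(1) tv[of j] tv[of "j+1"] by auto
  next
    fix j assume j: "n + 1 - t \<le> j" "j < n"
    have "\<sigma> (n - j) > \<sigma> (n - j + 1)" using t(2)[of "n - j"] j t(1) by auto
    moreover have "n - j + 1 = n + 1 - j" using j t(1) by auto
    ultimately show "?r j < ?r (j + 1)" using j t(1) tv[of j] tv[of "j+1"] by auto
  qed
  moreover have "inv ?r 1 = n + 1 - t" using permutes_inv_eq[OF p] r1 by simp
  ultimately show ?thesis using t(5) by simp
qed

lemma Tset_max:
  assumes "\<pi> \<in> Tset n" "n \<ge> 2"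
  shows "\<pi> 1 = n \<or> \<pi> n = n"
proof -
  obtain t where t: "t \<in> {1..n}" "\<And>j. 1 \<le> j \<Longrightarrow> j < t \<Longrightarrow> \<pi> j > \<pi> (j + 1)" "\<pi> t = 1"
    "\<And>j. t \<le> j \<Longrightarrow> j < n \<Longrightarrow> \<pi> j < \<pi> (j + 1)" "\<pi> permutes {1..n}"
    using TsetD[OF assms(1)] by metis
  define k where "k = inv \<pi> n"
  have pk: "\<pi> k = n" unfolding k_def using permutes_inverses(1)[OF t(5)] by simp
  have k: "k \<in> {1..n}" using pk permutes_in_image[OF t(5), of k] assms(2) by auto
  have bound: "\<And>x. x \<in> {1..n} \<Longrightarrow> \<pi> x \<le> n"
    using permutes_in_image[OF t(5)] by auto
  have "k = 1 \<or> k = n"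
  proof (rule ccontr)
    assume c: "\<not> (k = 1 \<or> k = n)"
    consider "k < t" | "k = t" | "k > t" by arith
    then show False
    proof cases
      case 1
      have k2: "k \<ge> 2" using c k by auto
      have "\<pi> (k - 1) > \<pi> (k - 1 + 1)" using t(2)[of "k - 1"] 1 k2 by simp
      moreover have "k - 1 + 1 = k" using k2 by simp
      moreover have "\<pi> (k - 1) \<le> n" using k k2 by (intro bound) auto
      ultimately show ?thesis using pk by simp
    next
      case 2 then show ?thesis using pk t(3) assms(2) by auto
    next
      case 3
      have kn: "k < n" using c k by auto
      have "\<pi> k < \<pi> (k + 1)" using t(4)[of k] 3 kn by simp
      moreover have "\<pi> (k + 1) \<le> n" using bound[of "k+1"] k kn by simp
      ultimately show ?thesis using pk by simp
    qed
  qed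
  then show ?thesis using pk by auto
qed

lemma Tset_down:
  assumes "\<pi> \<in> Tset (Suc m)" "\<pi> (Suc m) = Suc m" "m \<ge> 1"
  shows "\<pi> \<in> Tset m"
proof -
  obtain t where t: "t \<in> {1..Suc m}" "\<And>j. 1 \<le> j \<Longrightarrow> j < t \<Longrightarrow> \<pi> j > \<pi> (j + 1)" "\<pi> t = 1"
    "\<And>j. t \<le> j \<Longrightarrow> j < Suc m \<Longrightarrow> \<pi> j < \<pi> (j + 1)" "\<pi> permutes {1..Suc m}"
    using TsetD[OF assms(1)] by metis
  have p: "\<pi> permutes {1..m}"
    by (rule permutes_superset[OF t(5)]) (use assms(2) in \<open>auto simp: le_Suc_eq\<close>)
  have "t \<noteq> Suc m" using t(3) assms(2,3) by auto
  then have "t \<in> {1..m}" using t(1) by auto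
  then show ?thesis
    by (rule TsetI[OF p]) (use t in simp_all)
qed

lemma sign_eq:
  assumes "1 \<le> t" "t \<le> m"
  shows "((-1::int) ^ (m + 1 - t)) = (-1) ^ m * (-1) ^ (t - 1)"
proof -
  have m: "m = (m + 1 - t) + (t - 1)" using assms by simp
  have "(-1::int) ^ m * (-1) ^ (t - 1) = (-1) ^ (m + 1 - t) * ((-1) ^ (t - 1) * (-1) ^ (t - 1))"
    by (subst m) (simp add: power_add mult_ac)
  also have "\<dots> = (-1) ^ (m + 1 - t)"
    by (simp add: power_add[symmetric])
  finally show ?thesis by simp
qed

lemma Tset_fix:
  assumes "\<sigma> \<in> Tset m" "x \<notin> {1..m}" shows "\<sigma> x = x"
proof -
  have p: "\<sigma> permutes {1..m}" using assms(1) unfolding Tset_def Sym_def by auto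
  show ?thesis using permutes_not_in[OF p] assms(2) by blast
qed

lemma Tset_img:
  assumes "\<sigma> \<in> Tset m" "x \<in> {1..m}" shows "\<sigma> x \<in> {1..m}"
proof -
  have p: "\<sigma> permutes {1..m}" using assms(1) unfolding Tset_def Sym_def by auto
  show ?thesis using permutes_in_image[OF p, of x] assms(2) by blast
qed

lemma v_step:
  assumes m: "m \<ge> 1"
  shows "v_elem (Suc m) \<pi> = v_elem m \<pi> + (-1) ^ m * v_elem m (\<pi> \<circ> tau (Suc m))"
proof -
  let ?M = "Suc m"
  let ?r = "\<pi> \<circ> tau ?M"
  have tM: "tau ?M ?M = 1" "tau ?M 1 = ?M" unfolding tau_def by auto
  have rr: "?r \<circ> tau ?M = \<pi>" by (auto simp: tau_invol)
  consider (A) "\<pi> \<in> Tset m" | (B) "?r \<in> Tset m" | (C) "\<pi> \<notin> Tset m" "?r \<notin> Tset m" by blast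
  then show ?thesis
  proof cases
    case A
    have "\<pi> 1 \<in> {1..m}" using Tset_img[OF A] m by simp
    then have "?r ?M \<noteq> ?M" using tM by simp
    then have "?r \<notin> Tset m" using Tset_fix[of ?r m ?M] by auto
    moreover have "\<pi> \<in> Tset ?M" using Tset_lift[OF A] .
    ultimately show ?thesis using A unfolding v_elem_def by simp
  next
    case B
    have "\<pi> 1 = ?M" using Tset_fix[OF B, of ?M] tM by simp
    then have nA: "\<pi> \<notin> Tset m" using Tset_img[of \<pi> m 1] m by force
    obtain t where t: "t \<in> {1..m}" "inv ?r 1 = t" using TsetD[OF B] by metis
    have rev: "\<pi> \<in> Tset ?M \<and> inv \<pi> 1 = ?M + 1 - t"
      using Tset_rev[OF Tset_lift[OF B]] rr t(2) by simp
    have "v_elem ?M \<pi> = (-1) ^ (m + 1 - t)" using rev t(1) unfolding v_elem_def by simp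
    also have "\<dots> = (-1) ^ m * (-1) ^ (t - 1)" using sign_eq[of t m] t(1) by simp
    finally show ?thesis using nA B t unfolding v_elem_def by simp
  next
    case C
    have "\<pi> \<notin> Tset ?M"
    proof
      assume P: "\<pi> \<in> Tset ?M"
      have "\<pi> 1 = ?M \<or> \<pi> ?M = ?M" using Tset_max[OF P] m by simp
      then show False
      proof
        assume "\<pi> ?M = ?M"
        then show False using Tset_down[OF P _ m] C by simp
      next
        assume h: "\<pi> 1 = ?M"
        have R: "?r \<in> Tset ?M" using Tset_rev[OF P] by simp
        have "?r ?M = ?M" using h tM by simp
        then show False using Tset_down[OF R _ m] C by simp
      qed
    qed
    then show ?thesis using C unfolding v_elem_def by simp
  qed
qed

lemma Tset_1: "Tset 1 = {id}"
proof -
  have "Tset 1 \<subseteq> {id}" unfolding Tset_def Sym_def by auto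
  moreover have "id \<in> Tset 1" by (rule TsetI[of _ 1 1]) auto
  ultimately show ?thesis by blast
qed

lemma v_1: "v_elem 1 = e"
  unfolding v_elem_def e_def Tset_1 by auto

lemma main_aux: "m \<ge> 1 \<Longrightarrow> v_elem m = foldl (\<lambda>a i. F i a) e [2..<m+1]"
proof (induction m rule: dec_induct)
  case base then show ?case using v_1 by simp
next
  case (step n)
  have "[2..<Suc n + 1] = [2..<n+1] @ [Suc n]" using step(1) by simp
  then have "foldl (\<lambda>a i. F i a) e [2..<Suc n + 1] = F (Suc n) (v_elem n)"
    using step(3) by simp
  also have "\<dots> = v_elem (Suc n)"
    unfolding F_def using v_step[OF step(1)] by (auto simp: fun_eq_iff)
  finally show ?case by simp
qed

theorem mainTheorem8:
  fixes m :: nat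
  assumes "m \<ge> 2"
  shows "v_elem m = prod_factors m"
  using main_aux[of m] assms prod_factors_F by simp

end
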